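(* Let $X$ be a time-homogeneous Markov chain on $\mathbf{R}$ with transition kernel $P$, arbitrary initial distribution, and renewal measure $U(B)=\sum_{n\ge0}\mathbf{P}\{X_n\in B\}$. Suppose there exists $A>0$ such that $\varepsilon:=\inf_{x\in\mathbf{R}}\mathbf{E}\min\{\xi(x),A\}>0$, and that $\delta:=\inf_{x\in\mathbf{R}}\mathbf{P}\{X_n>x\text{ for all }n\ge1\mid X_0=x\}>0$. Then $U(x,x+h]\le (A+h)/(\varepsilon\delta)$ for all $x\in\mathbf{R}$ and $h>0$; in particular $\sup_{k\in\mathbf{Z}}U(k,k+1]<\infty$.
   Context: $\xi(x)$ denotes a random variable distributed as the jump of the chain from $x$: $\mathbf{P}\{x+\xi(x)\in B\}=P(x,B)$. *)

theory Defs
  imports "HOL-Probability.Probability"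
begin

text \<open>Path measure (law of the whole trajectory (X_0, X_1, ...)) of the time-homogeneous
  Markov chain on the reals with initial distribution mu and transition kernel K,
  built with the library's Ionescu-Tulcea construction:
  X_0 has law mu and, given X_0..X_(i-1), X_i has law K (X_(i-1)).\<close>
definition markov_path :: "real measure \<Rightarrow> (real \<Rightarrow> real measure) \<Rightarrow> (nat \<Rightarrow> real) measure" where
  "markov_path \<mu> K =
     projective_family.lim UNIV
       (Ionescu_Tulcea.CI (\<lambda>i \<omega>. if i = 0 then \<mu> else K (\<omega> (i - 1))) (\<lambda>_. borel))
       (\<lambda>_. borel)"

definition renewal :: "real measure \<Rightarrow> (real \<Rightarrow> real measure) \<Rightarrow> real set \<Rightarrow> ennreal" where
  "renewal \<mu> K B = (\<Sum>n. emeasure (markov_path \<mu> K) {\<omega> \<in> space (markov_path \<mu> K). \<omega> n \<in> B})"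

end

theory Submission
  imports Defs
begin


lemma IT_markov:
  fixes K :: "real \<Rightarrow> real measure"
  assumes K: "K \<in> borel \<rightarrow>\<^sub>M prob_algebra borel" and nu: "prob_space \<nu>" "sets \<nu> = sets borel"
  shows "Ionescu_Tulcea (\<lambda>i \<omega>. if i = 0 then \<nu> else K (\<omega> (i - 1))) (\<lambda>_. borel)"
proof (rule Ionescu_Tulcea.intro, goal_cases)
  case (1 i)
  show ?case
  proof (cases "i = 0")
    case True
    have "\<nu> \<in> space (subprob_algebra borel)"
      using nu by (simp add: space_subprob_algebra prob_space_imp_subprob_space)
    then show ?thesis using True by simp
  next
    case False
    have "(\<lambda>\<omega>. K (\<omega> (i - 1))) \<in> Pi\<^sub>M {0..<i} (\<lambda>_. borel) \<rightarrow>\<^sub>M subprob_algebra borel"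
      by (rule measurable_compose[where f="\<lambda>\<omega>. \<omega> (i - 1)" and N=borel, OF measurable_component_singleton measurable_prob_algebraD[OF K]])
         (use \<open>i \<noteq> 0\<close> in \<open>simp_all\<close>)
    then show ?thesis using False by simp
  qed
next
  case (2 i x)
  show ?case
  proof (cases "i = 0")
    case False
    have "K (x (i - 1)) \<in> space (prob_algebra borel)"
      using measurable_space[OF K, of "x (i - 1)"] by simp
    then have "prob_space (K (x (i - 1)))" unfolding space_prob_algebra by blast
    then show ?thesis using False by (subst if_not_P)
  qed (use nu in simp)
qed

definition Kt :: "(real \<Rightarrow> real measure) \<Rightarrow> real \<Rightarrow> (real \<Rightarrow> ennreal) \<Rightarrow> real \<Rightarrow> ennreal" where
  "Kt K z f y = (\<integral>\<^sup>+w. indicator {z<..} w * f w \<partial>K y)"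

definition Yset :: "real \<Rightarrow> nat \<Rightarrow> (nat \<Rightarrow> real) set" where
  "Yset z j = {\<omega> \<in> space (PiM {0..<Suc j} (\<lambda>_. borel)). \<forall>m\<in>{1..j}. z < \<omega> m}"

lemma Yset_sets: "Yset z j \<in> sets (PiM {0..<Suc j} (\<lambda>_. borel))"
  unfolding Yset_def
proof (rule sets.sets_Collect_finite_All)
  fix m assume "m \<in> {1..j}"
  then have [measurable]: "(\<lambda>\<omega>. \<omega> m) \<in> borel_measurable (PiM {0..<Suc j} (\<lambda>_. borel :: real measure))"
    by (intro measurable_component_singleton) auto
  show "{\<omega> \<in> space (PiM {0..<Suc j} (\<lambda>_. borel)). z < (\<omega> m::real)} \<in> sets (PiM {0..<Suc j} (\<lambda>_. borel))"
    by measurable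
qed simp

lemma Kt_meas:
  assumes K: "K \<in> borel \<rightarrow>\<^sub>M subprob_algebra borel" and f[measurable]: "f \<in> borel_measurable borel"
  shows "Kt K z f \<in> borel_measurable borel"
  unfolding Kt_def[abs_def] using K by measurable

lemma Ktpow_meas:
  assumes K: "K \<in> borel \<rightarrow>\<^sub>M subprob_algebra borel" and f: "f \<in> borel_measurable borel"
  shows "(Kt K z ^^ j) f \<in> borel_measurable borel"
  by (induction j) (simp_all add: f Kt_meas[OF K])

locale mchain =
  fixes \<nu> :: "real measure" and K :: "real \<Rightarrow> real measure"
  assumes K: "K \<in> borel \<rightarrow>\<^sub>M prob_algebra borel" and nu: "prob_space \<nu>" "sets \<nu> = sets borel"
begin

sublocale IT: Ionescu_Tulcea "\<lambda>i \<omega>. if i = 0 then \<nu> else K (\<omega> (i - 1))" "\<lambda>_. borel"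
  by (rule IT_markov[OF K nu])

declare IT.C.simps[simp del]

abbreviation "CC n \<equiv> IT.C 0 n (\<lambda>_. undefined)"

lemma Ks[measurable]: "K \<in> borel \<rightarrow>\<^sub>M subprob_algebra borel"
  using measurable_prob_algebraD[OF K] .

lemma step:
  assumes g[measurable]: "g \<in> borel_measurable (PiM {0..<Suc (Suc n)} (\<lambda>_. borel))"
  shows "(\<integral>\<^sup>+\<omega>. g \<omega> \<partial>CC (Suc (Suc n))) = (\<integral>\<^sup>+\<omega>. (\<integral>\<^sup>+y. g (fun_upd \<omega> (Suc n) y) \<partial>K (\<omega> n)) \<partial>CC (Suc n))"
proof -
  have u: "(\<lambda>_. undefined) \<in> space (PiM {0..<0} (\<lambda>_. borel :: real measure))"
    by (simp add: space_PiM PiE_def extensional_def)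
  have sC: "sets (CC (Suc n)) = sets (PiM {0..<Suc n} (\<lambda>_. borel))"
    using IT.sets_C[OF u, of "Suc n"] by (simp del: IT.C.simps)
  have "CC (Suc (Suc n)) = CC (Suc n) \<bind> IT.eP (Suc n)" by (simp add: IT.C.simps)
  also have "(\<integral>\<^sup>+\<omega>. g \<omega> \<partial>(CC (Suc n) \<bind> IT.eP (Suc n))) = (\<integral>\<^sup>+\<omega>. (\<integral>\<^sup>+y. g y \<partial>IT.eP (Suc n) \<omega>) \<partial>CC (Suc n))"
    by (rule nn_integral_bind[OF g]) (simp only: measurable_cong_sets[OF sC refl] IT.measurable_eP)
  also have "\<dots> = (\<integral>\<^sup>+\<omega>. (\<integral>\<^sup>+y. g (fun_upd \<omega> (Suc n) y) \<partial>K (\<omega> n)) \<partial>CC (Suc n))"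
  proof (rule nn_integral_cong)
    fix \<omega> assume "\<omega> \<in> space (CC (Suc n))"
    then have w: "\<omega> \<in> space (PiM {0..<Suc n} (\<lambda>_. borel))"
      using IT.space_C[OF u, of "Suc n"] by (simp del: IT.C.simps)
    show "(\<integral>\<^sup>+y. g y \<partial>IT.eP (Suc n) \<omega>) = (\<integral>\<^sup>+y. g (fun_upd \<omega> (Suc n) y) \<partial>K (\<omega> n))"
      using IT.nn_integral_eP[OF w g] by simp
  qed
  finally show ?thesis .
qed

lemma base:
  assumes f[measurable]: "f \<in> borel_measurable borel"
  shows "(\<integral>\<^sup>+\<omega>. f (\<omega> 0) \<partial>CC (Suc 0)) = (\<integral>\<^sup>+y. f y \<partial>\<nu>)"
proof -
  have u: "(\<lambda>_. undefined) \<in> space (PiM {0..<0} (\<lambda>_. borel :: real measure))"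
    by (simp add: space_PiM PiE_def extensional_def)
  have "CC (Suc 0) = IT.eP 0 (\<lambda>_. undefined)"
    using bind_return[OF IT.measurable_eP u] by (simp add: IT.C.simps)
  then show ?thesis
    using u by (simp add: IT.nn_integral_eP)
qed

lemma mp_eq: "markov_path \<nu> K = IT.PF.lim"
  by (simp add: markov_path_def)

lemma emeasure_fin:
  assumes X: "X \<in> sets (PiM {0..<n} (\<lambda>_. borel))"
  shows "emeasure (markov_path \<nu> K) (prod_emb UNIV (\<lambda>_. borel) {0..<n} X) = emeasure (CC n) X"
proof -
  have "emeasure (markov_path \<nu> K) (prod_emb UNIV (\<lambda>_. borel) {0..<n} X) = emeasure (IT.CI {0..<n}) X"
    unfolding mp_eq by (rule IT.lim[OF _ X]) simp
  also have "\<dots> = emeasure (CC n) (prod_emb {0..<n} (\<lambda>_. borel) {0..<n} X)"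
    by (rule IT.emeasure_CI[OF _ X]) simp
  also have "prod_emb {0..<n} (\<lambda>_. borel) {0..<n} X = X"
    using sets.sets_into_space[OF X] by (intro prod_emb_id) (simp add: space_PiM)
  finally show ?thesis .
qed

lemma uspace: "(\<lambda>_. undefined) \<in> space (PiM {0..<0} (\<lambda>_. borel :: real measure))"
  by (simp add: space_PiM PiE_def extensional_def)

lemma prob_CC: "prob_space (CC n)"
  by (rule IT.prob_space_C[OF uspace])

lemma space_CC: "space (CC n) = space (PiM {0..<n} (\<lambda>_. borel))"
  using IT.space_C[OF uspace, of n] by (simp del: IT.C.simps)

lemma sets_CC: "sets (CC n) = sets (PiM {0..<n} (\<lambda>_. borel))"
  using IT.sets_C[OF uspace, of n] by (simp del: IT.C.simps)

lemma P_n_eq: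
  assumes B[measurable]: "B \<in> sets borel"
  shows "emeasure (markov_path \<nu> K) {\<omega> \<in> space (markov_path \<nu> K). \<omega> n \<in> B}
       = (\<integral>\<^sup>+\<omega>. indicator B (\<omega> n) \<partial>CC (Suc n))"
proof -
  define X where "X = {\<omega> \<in> space (PiM {0..<Suc n} (\<lambda>_. borel :: real measure)). \<omega> n \<in> B}"
  have X: "X \<in> sets (PiM {0..<Suc n} (\<lambda>_. borel))"
    unfolding X_def by measurable
  have "{\<omega> \<in> space (markov_path \<nu> K). \<omega> n \<in> B} = prod_emb UNIV (\<lambda>_. borel) {0..<Suc n} X"
    by (auto simp: mp_eq prod_emb_def X_def space_PiM PiE_def extensional_def)
  then have "emeasure (markov_path \<nu> K) {\<omega> \<in> space (markov_path \<nu> K). \<omega> n \<in> B} = emeasure (CC (Suc n)) X"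
    using emeasure_fin[OF X] by simp
  also have "\<dots> = (\<integral>\<^sup>+\<omega>. indicator X \<omega> \<partial>CC (Suc n))"
    using X by (simp add: sets_CC)
  also have "\<dots> = (\<integral>\<^sup>+\<omega>. indicator B (\<omega> n) \<partial>CC (Suc n))"
    by (rule nn_integral_cong) (auto simp: space_CC X_def split: split_indicator)
  finally show ?thesis .
qed

lemma green_bound:
  fixes F :: "real \<Rightarrow> ennreal" and C :: ennreal
  assumes B[measurable]: "B \<in> sets borel" and F[measurable]: "F \<in> borel_measurable borel"
    and FC: "\<And>y. F y \<le> C" and FL: "\<And>y. indicator B y + (\<integral>\<^sup>+w. F w \<partial>K y) \<le> F y"
  shows "renewal \<nu> K B \<le> C"
proof -
  define a where "a n = (\<integral>\<^sup>+\<omega>. F (\<omega> n) \<partial>CC (Suc n))" for n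
  define p where "p n = (\<integral>\<^sup>+\<omega>. indicator B (\<omega> n) \<partial>CC (Suc n))" for n
  have KF[measurable]: "(\<lambda>y. \<integral>\<^sup>+w. F w \<partial>K y) \<in> borel_measurable borel"
    by measurable
  have rec: "p n + a (Suc n) \<le> a n" for n
  proof -
    have "a (Suc n) = (\<integral>\<^sup>+\<omega>. (\<integral>\<^sup>+y. F (fun_upd \<omega> (Suc n) y (Suc n)) \<partial>K (\<omega> n)) \<partial>CC (Suc n))"
      unfolding a_def by (rule step) measurable
    also have "\<dots> = (\<integral>\<^sup>+\<omega>. (\<integral>\<^sup>+y. F y \<partial>K (\<omega> n)) \<partial>CC (Suc n))"
      by simp
    finally have "p n + a (Suc n) = (\<integral>\<^sup>+\<omega>. indicator B (\<omega> n) + (\<integral>\<^sup>+y. F y \<partial>K (\<omega> n)) \<partial>CC (Suc n))"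
      unfolding p_def by (subst nn_integral_add) (auto simp: measurable_cong_sets[OF sets_CC refl])
    also have "\<dots> \<le> a n"
      unfolding a_def by (intro nn_integral_mono FL)
    finally show ?thesis .
  qed
  have a0: "a 0 \<le> C"
  proof -
    have "a 0 = (\<integral>\<^sup>+y. F y \<partial>\<nu>)" unfolding a_def by (rule base[OF F])
    also have "\<dots> \<le> (\<integral>\<^sup>+y. C \<partial>\<nu>)" by (intro nn_integral_mono FC)
    also have "\<dots> = C" using prob_space.emeasure_space_1[OF nu(1)] by simp
    finally show ?thesis .
  qed
  have sum: "(\<Sum>i<N. p i) + a N \<le> a 0" for N
  proof (induction N)
    case (Suc N)
    have "(\<Sum>i<Suc N. p i) + a (Suc N) = (\<Sum>i<N. p i) + (p N + a (Suc N))"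
      by (simp add: add.assoc)
    also have "\<dots> \<le> (\<Sum>i<N. p i) + a N" by (rule add_left_mono[OF rec])
    also have "\<dots> \<le> a 0" by (rule Suc.IH)
    finally show ?case .
  qed simp
  have "renewal \<nu> K B = (\<Sum>n. p n)"
    unfolding renewal_def p_def using P_n_eq[OF B] by simp
  also have "\<dots> = (SUP N. \<Sum>i<N. p i)" by (rule suminf_eq_SUP)
  also have "\<dots> \<le> C"
  proof (rule SUP_least)
    fix N
    have "(\<Sum>i<N. p i) \<le> (\<Sum>i<N. p i) + a N" by simp
    also have "\<dots> \<le> C" using sum[of N] a0 by simp
    finally show "(\<Sum>i<N. p i) \<le> C" .
  qed
  finally show ?thesis .
qed

lemma sK: "sets (K y) = sets borel"
proof -
  have "K y \<in> space (prob_algebra borel)" using measurable_space[OF K] by simp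
  then show ?thesis unfolding space_prob_algebra by blast
qed

lemma Yset_upd:
  assumes w: "\<omega> \<in> space (PiM {0..<Suc j} (\<lambda>_. borel :: real measure))"
  shows "indicator (Yset z (Suc j)) (fun_upd \<omega> (Suc j) y) = (indicator (Yset z j) \<omega> * indicator {z<..} y :: ennreal)"
proof -
  have sp: "fun_upd \<omega> (Suc j) y \<in> space (PiM {0..<Suc (Suc j)} (\<lambda>_. borel :: real measure))"
    using w by (auto simp: space_PiM PiE_def extensional_def)
  have "(\<forall>m\<in>{1..Suc j}. z < (fun_upd \<omega> (Suc j) y) m) \<longleftrightarrow> (\<forall>m\<in>{1..j}. z < \<omega> m) \<and> z < y"
    by (auto simp: le_Suc_eq)
  then have mem: "(fun_upd \<omega> (Suc j) y \<in> Yset z (Suc j)) = (\<omega> \<in> Yset z j \<and> z < y)"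
    unfolding Yset_def using w sp by (simp only: mem_Collect_eq) blast
  show ?thesis by (simp only: indicator_def mem) simp
qed

lemma Phi:
  assumes f[measurable]: "f \<in> borel_measurable borel"
  shows "(\<integral>\<^sup>+\<omega>. indicator (Yset z j) \<omega> * f (\<omega> j) \<partial>CC (Suc j)) = (\<integral>\<^sup>+y. (Kt K z ^^ j) f y \<partial>\<nu>)"
  using f
proof (induction j arbitrary: f)
  case 0
  have "(\<integral>\<^sup>+\<omega>. indicator (Yset z 0) \<omega> * f (\<omega> 0) \<partial>CC (Suc 0)) = (\<integral>\<^sup>+\<omega>. f (\<omega> 0) \<partial>CC (Suc 0))"
    by (rule nn_integral_cong) (simp add: Yset_def space_CC)
  also have "\<dots> = (\<integral>\<^sup>+y. f y \<partial>\<nu>)" by (rule base[OF 0])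
  finally show ?case by simp
next
  case (Suc j)
  note fm[measurable] = Suc.prems
  have Ym[measurable]: "Yset z (Suc j) \<in> sets (PiM {0..<Suc (Suc j)} (\<lambda>_. borel))"
    by (rule Yset_sets)
  have "(\<integral>\<^sup>+\<omega>. indicator (Yset z (Suc j)) \<omega> * f (\<omega> (Suc j)) \<partial>CC (Suc (Suc j)))
      = (\<integral>\<^sup>+\<omega>. (\<integral>\<^sup>+y. indicator (Yset z (Suc j)) (fun_upd \<omega> (Suc j) y) * f (fun_upd \<omega> (Suc j) y (Suc j)) \<partial>K (\<omega> j)) \<partial>CC (Suc j))"
    by (rule step) measurable
  also have "\<dots> = (\<integral>\<^sup>+\<omega>. indicator (Yset z j) \<omega> * Kt K z f (\<omega> j) \<partial>CC (Suc j))"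
  proof (rule nn_integral_cong)
    fix \<omega> assume "\<omega> \<in> space (CC (Suc j))"
    then have w: "\<omega> \<in> space (PiM {0..<Suc j} (\<lambda>_. borel :: real measure))" by (simp add: space_CC)
    have "(\<integral>\<^sup>+y. indicator (Yset z (Suc j)) (fun_upd \<omega> (Suc j) y) * f (fun_upd \<omega> (Suc j) y (Suc j)) \<partial>K (\<omega> j))
        = (\<integral>\<^sup>+y. indicator (Yset z j) \<omega> * (indicator {z<..} y * f y) \<partial>K (\<omega> j))"
      by (rule nn_integral_cong) (simp add: Yset_upd[OF w] mult.assoc)
    also have "\<dots> = indicator (Yset z j) \<omega> * Kt K z f (\<omega> j)"
      unfolding Kt_def
      by (rule nn_integral_cmult) (simp add: measurable_cong_sets[OF sK refl])
    finally show "(\<integral>\<^sup>+y. indicator (Yset z (Suc j)) (fun_upd \<omega> (Suc j) y) * f (fun_upd \<omega> (Suc j) y (Suc j)) \<partial>K (\<omega> j))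
        = indicator (Yset z j) \<omega> * Kt K z f (\<omega> j)" .
  qed
  also have "\<dots> = (\<integral>\<^sup>+y. (Kt K z ^^ j) (Kt K z f) y \<partial>\<nu>)"
    by (rule Suc.IH) (rule Kt_meas[OF Ks fm])
  also have "\<dots> = (\<integral>\<^sup>+y. (Kt K z ^^ Suc j) f y \<partial>\<nu>)"
    by (simp only: funpow_Suc_right comp_def)
  finally show ?case .
qed

lemma delta_le:
  "emeasure (markov_path \<nu> K) {\<omega> \<in> space (markov_path \<nu> K). \<forall>n\<ge>1. z < \<omega> n}
    \<le> (\<integral>\<^sup>+y. (Kt K z ^^ j) (\<lambda>_. 1) y \<partial>\<nu>)"
proof -
  have Y: "Yset z j \<in> sets (PiM {0..<Suc j} (\<lambda>_. borel))" by (rule Yset_sets)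
  have "{\<omega> \<in> space (markov_path \<nu> K). \<forall>n\<ge>1. z < \<omega> n} \<subseteq> prod_emb UNIV (\<lambda>_. borel) {0..<Suc j} (Yset z j)"
    by (auto simp: mp_eq prod_emb_def Yset_def space_PiM PiE_def extensional_def)
  then have "emeasure (markov_path \<nu> K) {\<omega> \<in> space (markov_path \<nu> K). \<forall>n\<ge>1. z < \<omega> n}
      \<le> emeasure (markov_path \<nu> K) (prod_emb UNIV (\<lambda>_. borel) {0..<Suc j} (Yset z j))"
  proof (rule emeasure_mono)
    show "prod_emb UNIV (\<lambda>_. borel) {0..<Suc j} (Yset z j) \<in> sets (markov_path \<nu> K)"
      unfolding mp_eq IT.PF.sets_lim by (rule measurable_prod_emb[OF _ Y]) simp
  qed
  also have "\<dots> = emeasure (CC (Suc j)) (Yset z j)" by (rule emeasure_fin[OF Y])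
  also have "\<dots> = (\<integral>\<^sup>+\<omega>. indicator (Yset z j) \<omega> * (\<lambda>_. 1) (\<omega> j) \<partial>CC (Suc j))"
    using Y by (simp add: sets_CC)
  also have "\<dots> = (\<integral>\<^sup>+y. (Kt K z ^^ j) (\<lambda>_. 1) y \<partial>\<nu>)"
    by (rule Phi) simp
  finally show ?thesis .
qed

end



primrec gk :: "(real \<Rightarrow> real measure) \<Rightarrow> real \<Rightarrow> nat \<Rightarrow> real \<Rightarrow> ennreal" where
  "gk K t 0 y = (if y \<le> t then 1 else 0)"
| "gk K t (Suc k) y = (if y \<le> t then 1 else \<integral>\<^sup>+w. gk K t k w \<partial>K y)"

context
  fixes K :: "real \<Rightarrow> real measure"
  assumes K: "K \<in> borel \<rightarrow>\<^sub>M prob_algebra borel"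
begin

lemma Ks'[measurable]: "K \<in> borel \<rightarrow>\<^sub>M subprob_algebra borel"
  using measurable_prob_algebraD[OF K] .

lemma Kprob: "prob_space (K y)" and Ksets: "sets (K y) = sets borel"
proof -
  have "K y \<in> space (prob_algebra borel)" using measurable_space[OF K] by simp
  then show "prob_space (K y)" "sets (K y) = sets borel" unfolding space_prob_algebra by blast+
qed

lemma emK1[simp]: "emeasure (K y) (space (K y)) = 1"
  using prob_space.emeasure_space_1[OF Kprob] .

lemma int_const: "(\<integral>\<^sup>+w. c \<partial>K y) = c"
  using prob_space.emeasure_space_1[OF Kprob] by simp

lemma gk_meas[measurable]: "gk K t k \<in> borel_measurable borel"
proof (induction k)
  case 0 show ?case by (simp add: gk.simps(1)[abs_def])
next
  case (Suc k)
  note [measurable] = Suc.IH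
  show ?case unfolding gk.simps(2)[abs_def] by measurable
qed

lemma gk_le1: "gk K t k y \<le> 1"
proof (induction k arbitrary: y)
  case (Suc k)
  have "(\<integral>\<^sup>+w. gk K t k w \<partial>K y) \<le> (\<integral>\<^sup>+w. 1 \<partial>K y)" by (intro nn_integral_mono Suc.IH)
  then show ?case by (simp add: int_const)
qed simp

lemma gk_mono: "gk K t k y \<le> gk K t (Suc k) y"
proof (induction k arbitrary: y)
  case (Suc k)
  have "(\<integral>\<^sup>+w. gk K t k w \<partial>K y) \<le> (\<integral>\<^sup>+w. gk K t (Suc k) w \<partial>K y)" by (intro nn_integral_mono Suc.IH)
  then show ?case by (simp del: gk.simps(2) add: gk.simps(2)[of K t k] gk.simps(2)[of K t "Suc k"])
qed simp

lemma gk_incseq: "incseq (\<lambda>k. gk K t k y)"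
  by (rule incseq_SucI) (rule gk_mono)

lemma gk_R: "t < z \<Longrightarrow> t < y \<Longrightarrow> gk K t k y + (Kt K z ^^ k) (\<lambda>_. 1) y \<le> 1"
proof (induction k arbitrary: y)
  case 0 then show ?case by simp
next
  case (Suc k)
  have Rm[measurable]: "(Kt K z ^^ k) (\<lambda>_. 1) \<in> borel_measurable borel"
    by (rule Ktpow_meas[OF Ks']) simp
  have "gk K t (Suc k) y + (Kt K z ^^ Suc k) (\<lambda>_. 1) y
      = (\<integral>\<^sup>+w. gk K t k w \<partial>K y) + (\<integral>\<^sup>+w. indicator {z<..} w * (Kt K z ^^ k) (\<lambda>_. 1) w \<partial>K y)"
    using Suc.prems by (simp add: Kt_def)
  also have "\<dots> = (\<integral>\<^sup>+w. gk K t k w + indicator {z<..} w * (Kt K z ^^ k) (\<lambda>_. 1) w \<partial>K y)"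
    by (rule nn_integral_add[symmetric]) (simp_all add: measurable_cong_sets[OF Ksets refl])
  also have "\<dots> \<le> (\<integral>\<^sup>+w. 1 \<partial>K y)"
  proof (rule nn_integral_mono)
    fix w
    show "gk K t k w + indicator {z<..} w * (Kt K z ^^ k) (\<lambda>_. 1) w \<le> 1"
    proof (cases "z < w")
      case True
      have "gk K t k w + (Kt K z ^^ k) (\<lambda>_. 1) w \<le> 1"
        by (rule Suc.IH) (use Suc.prems True in auto)
      then show ?thesis using True by simp
    next
      case False
      then show ?thesis using gk_le1[where k=k and y=w] by simp
    qed
  qed
  finally show ?case by (simp add: int_const)
qed

definition "gg t y = (SUP k. gk K t k y)"

lemma gg_meas[measurable]: "gg t \<in> borel_measurable borel"
  unfolding gg_def[abs_def] by measurable

lemma gg_le1: "gg t y \<le> 1"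
  unfolding gg_def by (rule SUP_least) (rule gk_le1)

lemma gg_low: "y \<le> t \<Longrightarrow> gg t y = 1"
proof -
  assume "y \<le> t"
  then have "gk K t k y = 1" for k by (cases k) simp_all
  then show "gg t y = 1" unfolding gg_def by simp
qed

lemma gg_harm: "t < y \<Longrightarrow> gg t y = (\<integral>\<^sup>+w. gg t w \<partial>K y)"
proof -
  assume ty: "t < y"
  have "gg t y = (SUP k. gk K t (Suc k) y)"
    unfolding gg_def
  proof (rule antisym)
    show "(SUP k. gk K t k y) \<le> (SUP k. gk K t (Suc k) y)"
      by (rule SUP_mono) (use gk_mono in blast)
    show "(SUP k. gk K t (Suc k) y) \<le> (SUP k. gk K t k y)"
      by (rule SUP_mono) blast
  qed
  also have "\<dots> = (SUP k. \<integral>\<^sup>+w. gk K t k w \<partial>K y)"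
    using ty by simp
  also have "\<dots> = (\<integral>\<^sup>+w. gg t w \<partial>K y)"
    unfolding gg_def
  proof (rule nn_integral_monotone_convergence_SUP[symmetric])
    show "incseq (\<lambda>k. gk K t k)"
      by (rule incseq_SucI) (unfold le_fun_def, use gk_mono in blast)
    show "gk K t i \<in> borel_measurable (K y)" for i
      by (simp add: measurable_cong_sets[OF Ksets refl])
  qed
  finally show ?thesis .
qed

end



lemma ennreal_add_le1: "a + ennreal d \<le> 1 \<Longrightarrow> 0 \<le> d \<Longrightarrow> a \<le> ennreal (1 - d)"
proof (cases a)
  case (real r)
  assume as: "a + ennreal d \<le> 1" "0 \<le> d"
  have "ennreal (r + d) = a + ennreal d" using real as(2) by (simp add: ennreal_plus)
  with as(1) have "ennreal (r + d) \<le> 1" by simp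
  then have "r + d \<le> 1" by (simp only: ennreal_le_1)
  then have "ennreal r \<le> ennreal (1 - d)" by (intro ennreal_leI) simp
  then show ?thesis using real by simp
next
  case top
  assume "a + ennreal d \<le> 1"
  with top show ?thesis by (simp add: top_unique)
qed

lemma delta_return:
  fixes K :: "real \<Rightarrow> real measure"
  assumes K: "K \<in> borel \<rightarrow>\<^sub>M prob_algebra borel"
    and db: "\<delta> \<le> measure (markov_path (return borel z) K)
              {\<omega> \<in> space (markov_path (return borel z) K). \<forall>n\<ge>1. \<omega> n > z}"
  shows "ennreal \<delta> \<le> (Kt K z ^^ j) (\<lambda>_. 1) z"
proof -
  interpret mc: mchain "return borel z" K
    by (rule mchain.intro[OF K prob_space_return]) simp_all
  let ?M = "markov_path (return borel z) K"
  let ?S = "{\<omega> \<in> space ?M. \<forall>n\<ge>1. z < \<omega> n}"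
  have "ennreal \<delta> \<le> ennreal (measure ?M ?S)" using db by (intro ennreal_leI) simp
  also have "\<dots> \<le> emeasure ?M ?S"
    by (cases "emeasure ?M ?S = \<top>") (simp_all add: emeasure_eq_ennreal_measure)
  also have "\<dots> \<le> (\<integral>\<^sup>+y. (Kt K z ^^ j) (\<lambda>_. 1) y \<partial>return borel z)"
    by (rule mc.delta_le)
  also have "\<dots> = (Kt K z ^^ j) (\<lambda>_. 1) z"
    by (rule nn_integral_return) (simp_all add: Ktpow_meas[OF measurable_prob_algebraD[OF K]])
  finally show ?thesis .
qed

lemma main_bound:
  fixes \<mu> :: "real measure" and K :: "real \<Rightarrow> real measure" and A \<epsilon> \<delta> x h :: real
  assumes K: "K \<in> borel \<rightarrow>\<^sub>M prob_algebra borel"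
    and mu: "prob_space \<mu>" "sets \<mu> = sets borel"
    and A: "A > 0"
    and eps_pos: "\<epsilon> > 0"
    and eps_int: "\<And>x. integrable (K x) (\<lambda>y. min (y - x) A)"
    and eps_bound: "\<And>x. \<epsilon> \<le> (\<integral>y. min (y - x) A \<partial>K x)"
    and delta_pos: "\<delta> > 0"
    and delta_bound: "\<And>x. \<delta> \<le> measure (markov_path (return borel x) K)
              {\<omega> \<in> space (markov_path (return borel x) K). \<forall>n\<ge>1. \<omega> n > x}"
    and h: "h > 0"
  shows "renewal \<mu> K {x<..x + h} \<le> ennreal ((A + h) / (\<epsilon> * \<delta>))"
proof -
  interpret mc: mchain \<mu> K by (rule mchain.intro[OF K mu])
  define t where "t = x + h"
  define c' where "c' = (A + h) / (\<epsilon> * \<delta>)"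
  define c where "c = c' * (1 - \<delta>)"
  have Rz: "ennreal \<delta> \<le> (Kt K z ^^ j) (\<lambda>_. 1) z" for z j
    by (rule delta_return[OF K delta_bound])
  have d1: "\<delta> \<le> 1"
  proof -
    have "ennreal \<delta> \<le> 1" using Rz[of 0 0] by simp
    then show ?thesis by (simp add: ennreal_le_1)
  qed
  have cc': "c + (h + A) / \<epsilon> = c'"
    unfolding c_def c'_def using eps_pos delta_pos by (simp add: field_simps)
  have c_nn: "0 \<le> c" unfolding c_def c'_def using d1 A h eps_pos delta_pos by simp
  have c'_nn: "0 \<le> c'" unfolding c'_def using A h eps_pos delta_pos by simp
  have gbound: "gg K t z \<le> ennreal (1 - \<delta>)" if "t < z" for z
  proof -
    have "gg K t z = (SUP k. gk K t k z)" by (rule gg_def[OF K])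
    also have "\<dots> \<le> ennreal (1 - \<delta>)"
  proof (rule SUP_least)
    fix k
    have "gk K t k z + ennreal \<delta> \<le> gk K t k z + (Kt K z ^^ k) (\<lambda>_. 1) z"
      by (intro add_left_mono Rz)
    also have "\<dots> \<le> 1" by (rule gk_R[OF K]) (use that in auto)
    finally show "gk K t k z \<le> ennreal (1 - \<delta>)"
      by (rule ennreal_add_le1) (use delta_pos in simp)
  qed
    finally show ?thesis .
  qed
  define F where "F y = (if y \<le> t then ennreal (c + (t + A - max y x) / \<epsilon>) else ennreal c' * gg K t y)" for y
  have Fm[measurable]: "F \<in> borel_measurable borel"
    unfolding F_def[abs_def] using gg_meas[OF K] by measurable
  have FC: "F y \<le> ennreal c'" for y
  proof (cases "y \<le> t")
    case True
    have "c + (t + A - max y x) / \<epsilon> \<le> c + (t + A - x) / \<epsilon>"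
      using eps_pos by (intro add_left_mono divide_right_mono) auto
    also have "\<dots> = c'" using cc' by (simp add: t_def add.commute)
    finally show ?thesis using True unfolding F_def by (simp add: ennreal_leI)
  next
    case False
    have "ennreal c' * gg K t y \<le> ennreal c' * 1" by (intro mult_left_mono gg_le1[OF K]) simp
    then show ?thesis using False unfolding F_def by simp
  qed
  have FL: "indicator {x<..t} y + (\<integral>\<^sup>+w. F w \<partial>K y) \<le> F y" for y
  proof -
    interpret Ky: prob_space "K y" by (rule Kprob[OF K])
    have sK: "sets (K y) = sets borel" by (rule Ksets[OF K])
    consider "t < y" | "y \<le> x" | "x < y \<and> y \<le> t" by linarith
    then show ?thesis
    proof cases
      case 1
      have "(\<integral>\<^sup>+w. F w \<partial>K y) \<le> (\<integral>\<^sup>+w. ennreal c' * gg K t w \<partial>K y)"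
      proof (rule nn_integral_mono)
        fix w show "F w \<le> ennreal c' * gg K t w"
          using FC[of w] gg_low[OF K, of w t] by (cases "w \<le> t") (auto simp: F_def)
      qed
      also have "\<dots> = ennreal c' * (\<integral>\<^sup>+w. gg K t w \<partial>K y)"
        by (rule nn_integral_cmult) (simp add: measurable_cong_sets[OF sK refl] gg_meas[OF K])
      also have "\<dots> = F y" using 1 gg_harm[OF K 1] by (simp add: F_def)
      finally show ?thesis using 1 by simp
    next
      case 2
      have "(\<integral>\<^sup>+w. F w \<partial>K y) \<le> (\<integral>\<^sup>+w. ennreal c' \<partial>K y)"
        by (intro nn_integral_mono FC)
      also have "\<dots> = ennreal c'" by (simp add: Ky.emeasure_space_1)
      also have "\<dots> = F y"
        using 2 h cc' unfolding F_def t_def by (simp add: max_def add.commute)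
      finally show ?thesis using 2 by simp
    next
      case 3
      define \<psi> where "\<psi> w = (if w \<le> t then t + A - w else 0)" for w
      define \<phi> where "\<phi> w = c + \<psi> w / \<epsilon>" for w
      have \<psi>m[measurable]: "\<psi> \<in> borel_measurable borel" unfolding \<psi>_def[abs_def] by measurable
      have \<psi>nn: "0 \<le> \<psi> w" for w unfolding \<psi>_def using A by auto
      have bnd: "\<psi> w \<le> (t + A - y) - min (w - y) A" for w
        using 3 A unfolding \<psi>_def by (auto simp: min_def)
      have int_min: "integrable (K y) (\<lambda>w. min (w - y) A)" by (rule eps_int)
      have int_b: "integrable (K y) (\<lambda>w. (t + A - y) - min (w - y) A)"
        using int_min by simp
      have int_psi: "integrable (K y) \<psi>"
      proof (rule Bochner_Integration.integrable_bound[OF int_b])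
        show "\<psi> \<in> borel_measurable (K y)" by (simp add: measurable_cong_sets[OF sK refl])
        show "AE w in K y. norm (\<psi> w) \<le> norm ((t + A - y) - min (w - y) A)"
          using bnd \<psi>nn by (auto intro!: AE_I2 order_trans[OF _ abs_ge_self])
      qed
      have int_phi: "integrable (K y) \<phi>" unfolding \<phi>_def using int_psi by simp
      have "(\<integral>w. \<psi> w \<partial>K y) \<le> (\<integral>w. (t + A - y) - min (w - y) A \<partial>K y)"
        by (rule integral_mono[OF int_psi int_b bnd])
      also have "\<dots> = (t + A - y) - (\<integral>w. min (w - y) A \<partial>K y)"
        using int_min by (simp add: Ky.prob_space)
      also have "\<dots> \<le> (t + A - y) - \<epsilon>" using eps_bound[of y] by simp
      finally have ipsi: "(\<integral>w. \<psi> w \<partial>K y) \<le> t + A - y - \<epsilon>" .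
      have iphi: "(\<integral>w. \<phi> w \<partial>K y) = c + (\<integral>w. \<psi> w \<partial>K y) / \<epsilon>"
        unfolding \<phi>_def using int_psi by (simp add: Ky.prob_space)
      have "(\<integral>\<^sup>+w. F w \<partial>K y) \<le> (\<integral>\<^sup>+w. ennreal (\<phi> w) \<partial>K y)"
      proof (rule nn_integral_mono)
        fix w show "F w \<le> ennreal (\<phi> w)"
        proof (cases "w \<le> t")
          case True
          have "c + (t + A - max w x) / \<epsilon> \<le> \<phi> w"
            unfolding \<phi>_def \<psi>_def using True eps_pos by (intro add_left_mono divide_right_mono) auto
          then show ?thesis using True unfolding F_def by (simp add: ennreal_leI)
        next
          case False
          have "ennreal c' * gg K t w \<le> ennreal c' * ennreal (1 - \<delta>)"
            using False by (intro mult_left_mono gbound) auto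
          also have "\<dots> = ennreal c" unfolding c_def using c'_nn d1 by (simp add: ennreal_mult)
          also have "\<dots> = ennreal (\<phi> w)" using False unfolding \<phi>_def \<psi>_def by simp
          finally show ?thesis using False unfolding F_def by simp
        qed
      qed
      also have "\<dots> = ennreal (\<integral>w. \<phi> w \<partial>K y)"
        by (rule nn_integral_eq_integral[OF int_phi]) (use c_nn \<psi>nn eps_pos in \<open>auto simp: \<phi>_def\<close>)
      finally have I: "(\<integral>\<^sup>+w. F w \<partial>K y) \<le> ennreal (\<integral>w. \<phi> w \<partial>K y)" .
      have "indicator {x<..t} y + (\<integral>\<^sup>+w. F w \<partial>K y) \<le> ennreal 1 + ennreal (\<integral>w. \<phi> w \<partial>K y)"
        using 3 I by (simp add: add_left_mono)
      also have "\<dots> = ennreal (1 + (\<integral>w. \<phi> w \<partial>K y))"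
        by (rule ennreal_plus[symmetric]) (simp, use iphi c_nn \<psi>nn eps_pos in \<open>simp add: integral_nonneg_AE\<close>)
      also have "\<dots> \<le> ennreal (c + (t + A - y) / \<epsilon>)"
      proof (rule ennreal_leI)
        have "1 + (\<integral>w. \<phi> w \<partial>K y) \<le> 1 + (c + (t + A - y - \<epsilon>) / \<epsilon>)"
          unfolding iphi using ipsi eps_pos by (simp add: divide_right_mono)
        also have "\<dots> = c + (t + A - y) / \<epsilon>" using eps_pos by (simp add: field_simps)
        finally show "1 + (\<integral>w. \<phi> w \<partial>K y) \<le> c + (t + A - y) / \<epsilon>" .
      qed
      also have "\<dots> = F y" using 3 unfolding F_def by simp
      finally show ?thesis .
    qed
  qed
  have "renewal \<mu> K {x<..t} \<le> ennreal c'"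
    by (rule mc.green_bound[OF _ Fm FC FL]) simp
  then show ?thesis unfolding t_def c'_def .
qed


theorem theorem2:
  fixes \<mu> :: "real measure" and K :: "real \<Rightarrow> real measure" and A \<epsilon> \<delta> :: real
  assumes K: "K \<in> borel \<rightarrow>\<^sub>M prob_algebra borel"
    and mu: "prob_space \<mu>" "sets \<mu> = sets borel"
    and A: "A > 0"
    and eps_pos: "\<epsilon> > 0"
    and eps_int: "\<And>x. integrable (K x) (\<lambda>y. min (y - x) A)"
    and eps_bound: "\<And>x. \<epsilon> \<le> (\<integral>y. min (y - x) A \<partial>K x)"
    and delta_pos: "\<delta> > 0"
    and delta_bound: "\<And>x. \<delta> \<le> measure (markov_path (return borel x) K)
              {\<omega> \<in> space (markov_path (return borel x) K). \<forall>n\<ge>1. \<omega> n > x}"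
  shows "(\<forall>x h. h > 0 \<longrightarrow> renewal \<mu> K {x<..x + h} \<le> ennreal ((A + h) / (\<epsilon> * \<delta>)))
         \<and> (SUP k::int. renewal \<mu> K {real_of_int k<..real_of_int k + 1}) < \<infinity>"
proof (intro conjI allI impI)
  fix x h :: real assume "h > 0"
  then show "renewal \<mu> K {x<..x + h} \<le> ennreal ((A + h) / (\<epsilon> * \<delta>))"
    by (rule main_bound[OF K mu A eps_pos eps_int eps_bound delta_pos delta_bound])
next
  have "(SUP k::int. renewal \<mu> K {real_of_int k<..real_of_int k + 1}) \<le> ennreal ((A + 1) / (\<epsilon> * \<delta>))"
    by (rule SUP_least, rule main_bound[OF K mu A eps_pos eps_int eps_bound delta_pos delta_bound]) simp
  also have "\<dots> < \<infinity>" by simp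
  finally show "(SUP k::int. renewal \<mu> K {real_of_int k<..real_of_int k + 1}) < \<infinity>" .
qed

end
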